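(* Let $\alpha,\beta<1$ be real numbers. Let $A,B\subset\mathbb{N}$ be such that $A(X)\ge C\frac{\sqrt{X}}{(\log X)^{\alpha}}$ and $B(X)\ge C\frac{\sqrt{X}}{(\log X)^{\beta}}$ for some constant $C>0$ and all sufficiently large $X$. Then there is a constant $C'>0$ such that for all sufficiently large $X$, $$\sum_{\substack{a\in A,\ b\in B\\ ab\le X}}1\ge C'\sqrt{X}(\log X)^{1-\alpha-\beta}.$$
   Context: $\mathbb{N}$ is the set of positive integers; for $S\subset\mathbb{N}_0$, $S(X)=|S\cap[1,X]|$. *)

theory Defs
  imports Complex_Main
begin

definition count_upto :: "nat set \<Rightarrow> real \<Rightarrow> nat" where
  "count_upto S X = card {n \<in> S. 1 \<le> n \<and> real n \<le> X}"

end

theory Submission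
  imports Defs
begin

lemma count_fin: "finite {n \<in> S. 1 \<le> n \<and> real n \<le> Y}"
proof -
  have "{n \<in> S. 1 \<le> n \<and> real n \<le> Y} \<subseteq> {..nat \<lceil>Y\<rceil>}"
  proof
    fix n assume "n \<in> {n \<in> S. 1 \<le> n \<and> real n \<le> Y}"
    then have "real n \<le> Y" by simp
    then have "int n \<le> \<lceil>Y\<rceil>" by linarith
    then show "n \<in> {..nat \<lceil>Y\<rceil>}" by simp
  qed
  then show ?thesis using finite_subset by blast
qed

lemma count_mono: "X \<le> Y \<Longrightarrow> count_upto S X \<le> count_upto S Y"
  unfolding count_upto_def
  by (rule card_mono[OF count_fin]) auto

lemma inner:
  fixes g :: "nat \<Rightarrow> real" and a :: nat
  assumes X: "X > 0" and a: "a \<ge> 1"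
    and hB: "\<And>j. J1 \<le> j \<Longrightarrow> j \<le> J2 \<Longrightarrow> g j \<le> real (count_upto B (X / 2^j))"
  shows "J1 + n \<le> J2 \<Longrightarrow> a \<le> 2^(J1+n) \<Longrightarrow>
     (\<Sum>j\<in>{J1..<J1+n}. if a \<le> 2^j then g j - g (Suc j) else 0)
        \<le> real (count_upto B (X / a)) - g (J1+n)"
proof (induction n)
  case 0
  have "X / 2^J1 \<le> X / a"
    using 0 X a by (intro divide_left_mono) (auto simp: of_nat_le_iff[symmetric])
  then have "count_upto B (X / 2^J1) \<le> count_upto B (X / a)" by (rule count_mono)
  then show ?case using hB[of J1] 0 by simp
next
  case (Suc n)
  have le: "X / 2^(J1+Suc n) \<le> X / a"
    using Suc.prems X a by (intro divide_left_mono) (auto simp: of_nat_le_iff[symmetric] simp del: power_Suc)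
  show ?case
  proof (cases "a \<le> 2^(J1+n)")
    case True
    have "(\<Sum>j\<in>{J1..<J1+Suc n}. if a \<le> 2^j then g j - g (Suc j) else 0)
        = (\<Sum>j\<in>{J1..<J1+n}. if a \<le> 2^j then g j - g (Suc j) else 0) + (g (J1+n) - g (Suc (J1+n)))"
      using True by simp
    also have "\<dots> \<le> real (count_upto B (X / a)) - g (J1+n) + (g (J1+n) - g (Suc (J1+n)))"
      using Suc.IH Suc.prems True by simp
    finally show ?thesis by simp
  next
    case False
    have z: "(\<Sum>j\<in>{J1..<J1+Suc n}. if a \<le> 2^j then g j - g (Suc j) else 0) = 0"
    proof (rule sum.neutral, intro ballI)
      fix j assume "j \<in> {J1..<J1+Suc n}"
      then have "(2::nat)^j \<le> 2^(J1+n)" by (intro power_increasing) auto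
      then have "\<not> a \<le> 2^j" using False by linarith
      then show "(if a \<le> 2^j then g j - g (Suc j) else 0) = 0" by simp
    qed
    have "count_upto B (X / 2^(J1+Suc n)) \<le> count_upto B (X / a)" using le by (rule count_mono)
    then show ?thesis using z hB[of "J1 + Suc n"] Suc.prems by simp
  qed
qed

lemma rpow: "(real n \<le> 2^j) = (n \<le> 2^j)"
  by (metis of_nat_le_iff of_nat_numeral of_nat_power)

lemma pairs_fin:
  assumes "0 \<notin> A" "0 \<notin> B"
  shows "finite {(a, b). a \<in> A \<and> b \<in> B \<and> real (a * b) \<le> X}"
proof -
  have "{(a, b). a \<in> A \<and> b \<in> B \<and> real (a * b) \<le> X} \<subseteq> {..nat \<lceil>X\<rceil>} \<times> {..nat \<lceil>X\<rceil>}"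
  proof (clarsimp)
    fix a b assume ab: "a \<in> A" "b \<in> B" "real a * real b \<le> X"
    then have a1: "a \<ge> 1" "b \<ge> 1" using assms by (auto simp: Suc_le_eq intro!: Nat.gr0I)
    then have "real a \<le> real a * real b" "real b \<le> real a * real b" by auto
    then have "real a \<le> X" "real b \<le> X" using ab by linarith+
    then have "int a \<le> \<lceil>X\<rceil>" "int b \<le> \<lceil>X\<rceil>" by linarith+
    then show "a \<le> nat \<lceil>X\<rceil> \<and> b \<le> nat \<lceil>X\<rceil>" by (metis nat_int nat_mono)
  qed
  then show ?thesis by (rule finite_subset) auto
qed

lemma comb:
  fixes g :: "nat \<Rightarrow> real"
  assumes X: "X > 0" and J: "J1 \<le> J2" and A0: "0 \<notin> A" and B0: "0 \<notin> B"
    and hB: "\<And>j. J1 \<le> j \<Longrightarrow> j \<le> J2 \<Longrightarrow> g j \<le> real (count_upto B (X / 2^j))"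
    and g0: "g J2 \<ge> 0"
  shows "(\<Sum>j\<in>{J1..<J2}. (g j - g (Suc j)) * real (count_upto A (2^j)))
          \<le> real (card {(a, b). a \<in> A \<and> b \<in> B \<and> real (a * b) \<le> X})"
proof -
  define SA where "SA = {a \<in> A. 1 \<le> a \<and> a \<le> 2^J2}"
  have finSA: "finite SA" unfolding SA_def by (rule finite_subset[of _ "{..2^J2}"]) auto
  define F where "F a = {b \<in> B. 1 \<le> b \<and> real b \<le> X / real a}" for a
  have "Sigma SA F \<subseteq> {(a, b). a \<in> A \<and> b \<in> B \<and> real (a * b) \<le> X}"
  proof clarsimp
    fix a b assume "a \<in> SA" "b \<in> F a"
    then have "a \<in> A" "b \<in> B" "real b \<le> X / real a" "a \<ge> 1" unfolding SA_def F_def by auto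
    then show "a \<in> A \<and> b \<in> B \<and> real a * real b \<le> X"
      by (simp add: field_simps mult.commute)
  qed
  then have "card (Sigma SA F) \<le> card {(a, b). a \<in> A \<and> b \<in> B \<and> real (a * b) \<le> X}"
    by (intro card_mono pairs_fin A0 B0)
  moreover have "card (Sigma SA F) = (\<Sum>a\<in>SA. card (F a))"
    by (intro card_SigmaI finSA ballI) (unfold F_def, rule count_fin)
  ultimately have step1: "(\<Sum>a\<in>SA. real (count_upto B (X / real a)))
       \<le> real (card {(a, b). a \<in> A \<and> b \<in> B \<and> real (a * b) \<le> X})"
    unfolding count_upto_def F_def by (simp flip: of_nat_sum)
  have step2: "(\<Sum>j\<in>{J1..<J2}. if a \<le> 2^j then g j - g (Suc j) else 0)
        \<le> real (count_upto B (X / real a))" if "a \<in> SA" for a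
  proof -
    have a: "a \<ge> 1" "a \<le> 2^(J1 + (J2 - J1))" using that J unfolding SA_def by auto
    have "(\<Sum>j\<in>{J1..<J1 + (J2 - J1)}. if a \<le> 2^j then g j - g (Suc j) else 0)
        \<le> real (count_upto B (X / real a)) - g (J1 + (J2 - J1))"
      by (rule inner[OF X a(1) hB]) (use a J in auto)
    then show ?thesis using J g0 by simp
  qed
  have Int_eq: "SA \<inter> {a. a \<le> 2^j} = {a\<in>SA. a \<le> 2^j}" for j by blast
  have step3: "(\<Sum>a\<in>SA. \<Sum>j\<in>{J1..<J2}. if a \<le> 2^j then g j - g (Suc j) else 0)
      = (\<Sum>j\<in>{J1..<J2}. (g j - g (Suc j)) * real (count_upto A (2^j)))"
  proof -
    have "(\<Sum>a\<in>SA. \<Sum>j\<in>{J1..<J2}. if a \<le> 2^j then g j - g (Suc j) else 0)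
        = (\<Sum>j\<in>{J1..<J2}. \<Sum>a\<in>SA. if a \<le> 2^j then g j - g (Suc j) else 0)"
      by (rule sum.swap)
    also have "\<dots> = (\<Sum>j\<in>{J1..<J2}. (g j - g (Suc j)) * real (card {a\<in>SA. a \<le> 2^j}))"
      by (intro sum.cong refl) (simp add: sum.If_cases finSA Int_eq)
    also have "\<dots> = (\<Sum>j\<in>{J1..<J2}. (g j - g (Suc j)) * real (count_upto A (2^j)))"
    proof (intro sum.cong refl)
      fix j assume j: "j \<in> {J1..<J2}"
      have "(2::nat)^j \<le> 2^J2" using j by (intro power_increasing) auto
      then have "{a\<in>SA. a \<le> 2^j} = {n \<in> A. 1 \<le> n \<and> real n \<le> 2^j}"
        unfolding SA_def by (auto simp: rpow) (use \<open>(2::nat)^j \<le> 2^J2\<close> in linarith)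
      then show "(g j - g (Suc j)) * real (card {a\<in>SA. a \<le> 2^j}) = (g j - g (Suc j)) * real (count_upto A (2^j))"
        unfolding count_upto_def by simp
    qed
    finally show ?thesis .
  qed
  have "(\<Sum>a\<in>SA. \<Sum>j\<in>{J1..<J2}. if a \<le> 2^j then g j - g (Suc j) else 0)
       \<le> (\<Sum>a\<in>SA. real (count_upto B (X / real a)))"
    by (intro sum_mono step2)
  then show ?thesis using step1 step3 by linarith
qed

lemma ratio:
  fixes C \<beta> y :: real
  assumes C: "C > 0" and b: "\<beta> < 1" and y: "y > 0" and ly: "ln y \<ge> 6 * ln 2"
  shows "C * sqrt (y/2) / ln (y/2) powr \<beta> \<le> 9/10 * (C * sqrt y / ln y powr \<beta>)"
proof -
  define l where "l = ln y"
  define l2 where "l2 = ln (y/2)"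
  have ln2: "ln (2::real) > 0" by simp
  have l2eq: "l2 = l - ln 2" unfolding l_def l2_def using y by (simp add: ln_div)
  have lpos: "l > 0" using ly ln2 unfolding l_def by linarith
  have l2pos: "l2 > 0" "l2 \<ge> 5/6 * l" using l2eq ly ln2 unfolding l_def by linarith+
  define r where "r = l / l2"
  have r1: "r \<ge> 1"
  proof -
    have "l2 \<le> l" using l2eq ln2 by linarith
    then show ?thesis unfolding r_def using l2pos by simp
  qed
  have r2: "r \<le> 6/5" unfolding r_def using l2pos lpos by (simp add: field_simps)
  have lr: "l = r * l2" unfolding r_def using l2pos by simp
  have "l powr \<beta> = r powr \<beta> * l2 powr \<beta>" unfolding lr using r1 l2pos by (simp add: powr_mult)
  have rb: "r powr \<beta> \<le> r" using powr_mono[of \<beta> 1 r] b r1 by simp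
  have s2: "sqrt 2 \<ge> (1.4::real)" by (rule real_le_rsqrt) (simp add: power2_eq_square)
  have rb2: "r powr \<beta> \<le> 9/10 * sqrt 2" using rb r2 s2 by linarith
  have sq: "sqrt (y/2) = sqrt y / sqrt 2" by (simp add: real_sqrt_divide)
  have P: "C * sqrt y / l2 powr \<beta> > 0" using C y l2pos by simp
  have "C * sqrt (y/2) / l2 powr \<beta> = (C * sqrt y / l2 powr \<beta>) / sqrt 2" by (simp add: sq)
  also have "\<dots> \<le> (C * sqrt y / l2 powr \<beta>) * (9/10 / r powr \<beta>)"
  proof -
    have rp: "r powr \<beta> > 0" using r1 by simp
    have "1 / sqrt 2 \<le> 9/10 / r powr \<beta>" using rb2 rp by (simp add: field_simps)
    then have "(C * sqrt y / l2 powr \<beta>) * (1 / sqrt 2) \<le> (C * sqrt y / l2 powr \<beta>) * (9/10 / r powr \<beta>)"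
      using P by (intro mult_left_mono) auto
    then show ?thesis by simp
  qed
  also have "\<dots> = 9/10 * (C * sqrt y / l powr \<beta>)"
    using \<open>l powr \<beta> = r powr \<beta> * l2 powr \<beta>\<close> by (simp add: ac_simps)
  finally show ?thesis unfolding l_def l2_def .
qed

lemma Kbound:
  fixes r \<alpha> :: real
  assumes "1/4 \<le> r" "r \<le> 1"
  shows "(1/4) powr \<bar>\<alpha>\<bar> \<le> r powr (-\<alpha>)"
proof (cases "\<alpha> \<ge> 0")
  case True
  have "(1/4::real) powr \<bar>\<alpha>\<bar> \<le> 1" using True by (simp add: powr_le1)
  moreover have "1 \<le> r powr (-\<alpha>)" using assms True
  proof -
    have rp: "r > 0" using assms by linarith
    have "r powr \<alpha> \<le> 1" using powr_le1[of \<alpha> r] True assms by linarith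
    moreover have "r powr \<alpha> > 0" using rp by simp
    ultimately show ?thesis using rp by (simp add: powr_minus field_simps)
  qed
  ultimately show ?thesis by linarith
next
  case False
  then show ?thesis using assms by (simp add: powr_mono2)
qed

lemma powr_low:
  fixes u L a :: real
  assumes "L > 0" "1/4 * L \<le> u" "u \<le> L"
  shows "(1/4) powr \<bar>a\<bar> * L powr (-a) \<le> 1 / u powr a"
proof -
  have up: "u > 0" using assms by linarith
  have "u = L * (u / L)" using assms by simp
  then have "u powr (-a) = L powr (-a) * (u/L) powr (-a)"
    using assms up by (metis powr_mult less_imp_le divide_nonneg_pos)
  moreover have "(1/4) powr \<bar>a\<bar> \<le> (u/L) powr (-a)"
    using assms by (intro Kbound) (auto simp: field_simps)
  ultimately have "L powr (-a) * (1/4) powr \<bar>a\<bar> \<le> u powr (-a)"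
    using assms by (simp add: mult_left_mono)
  then show ?thesis by (simp add: powr_minus_divide ac_simps)
qed

lemma term_bound:
  fixes C \<alpha> \<beta> X cA L :: real and j :: nat
  assumes C: "C > 0" and b: "\<beta> < 1" and X: "X > 0" and L: "L = ln X" and L16: "L \<ge> 16"
    and u1: "L/4 \<le> real j * ln 2" and u2: "real j * ln 2 \<le> L/2"
    and hA: "C * sqrt (2^j) / ln (2^j) powr \<alpha> \<le> cA"
  shows "C^2/10 * ((1/4) powr \<bar>\<alpha>\<bar> * (1/4) powr \<bar>\<beta>\<bar>) * sqrt X * L powr (-\<alpha>-\<beta>)
     \<le> (C * sqrt (X/2^j) / ln (X/2^j) powr \<beta> - C * sqrt (X/2^(Suc j)) / ln (X/2^(Suc j)) powr \<beta>) * cA"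
proof -
  define u where "u = real j * ln 2"
  define v where "v = L - u"
  define y where "y = X / 2^j"
  have ln2: "ln (2::real) < 1" "ln (2::real) > 0" using ln_2_less_1 by auto
  have ypos: "y > 0" unfolding y_def using X by simp
  have lu: "ln ((2::real)^j) = u" unfolding u_def by (simp add: ln_realpow)
  have lv: "ln y = v" unfolding y_def v_def L using X lu by (simp add: ln_div)
  have Lpos: "L > 0" using L16 by linarith
  have ub: "1/4 * L \<le> u" "u \<le> L" using u1 u2 Lpos unfolding u_def by linarith+
  have vb: "1/4 * L \<le> v" "v \<le> L" using u1 u2 Lpos unfolding u_def v_def by linarith+
  have "v \<ge> L/2" using u2 unfolding v_def u_def by linarith
  then have ly: "ln y \<ge> 6 * ln 2" using lv L16 ln2 by linarith
  have y2: "X / 2^(Suc j) = y / 2" unfolding y_def by simp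
  have rat: "C * sqrt (y/2) / ln (y/2) powr \<beta> \<le> 9/10 * (C * sqrt y / ln y powr \<beta>)"
    by (rule ratio[OF C b ypos ly])
  define gj where "gj = C * sqrt y / v powr \<beta>"
  have gjpos: "gj > 0" unfolding gj_def using C ypos vb Lpos by simp
  define d where "d = C * sqrt (X/2^j) / ln (X/2^j) powr \<beta> - C * sqrt (X/2^(Suc j)) / ln (X/2^(Suc j)) powr \<beta>"
  have dge: "d \<ge> gj / 10" unfolding d_def y2 gj_def using rat lv unfolding y_def by simp
  define a0 where "a0 = C * sqrt (2^j) / u powr \<alpha>"
  have a0pos: "a0 > 0" unfolding a0_def using C ub Lpos by simp
  have ca: "a0 \<le> cA" using hA lu unfolding a0_def by simp
  have "gj / 10 * a0 \<le> d * cA"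
    using dge ca gjpos a0pos by (intro mult_mono) auto
  moreover have "gj / 10 * a0 = C^2/10 * sqrt X * (1 / u powr \<alpha>) * (1 / v powr \<beta>)"
  proof -
    have "sqrt y * sqrt (2^j) = sqrt X" unfolding y_def using X
      by (simp add: real_sqrt_mult[symmetric])
    then show ?thesis unfolding gj_def a0_def by (simp add: power2_eq_square field_simps)
  qed
  moreover have "(1/4) powr \<bar>\<alpha>\<bar> * L powr (-\<alpha>) \<le> 1 / u powr \<alpha>"
    using powr_low[OF Lpos ub] .
  moreover have "(1/4) powr \<bar>\<beta>\<bar> * L powr (-\<beta>) \<le> 1 / v powr \<beta>"
    using powr_low[OF Lpos vb] .
  moreover have "L powr (-\<alpha>-\<beta>) = L powr (-\<alpha>) * L powr (-\<beta>)"
    using Lpos by (simp add: powr_add[symmetric])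
  ultimately have "C^2/10 * sqrt X * ((1/4) powr \<bar>\<alpha>\<bar> * L powr (-\<alpha>)) * ((1/4) powr \<bar>\<beta>\<bar> * L powr (-\<beta>)) \<le> d * cA"
  proof -
    assume h: "gj / 10 * a0 \<le> d * cA" "gj / 10 * a0 = C^2/10 * sqrt X * (1 / u powr \<alpha>) * (1 / v powr \<beta>)"
      "(1/4) powr \<bar>\<alpha>\<bar> * L powr (-\<alpha>) \<le> 1 / u powr \<alpha>" "(1/4) powr \<bar>\<beta>\<bar> * L powr (-\<beta>) \<le> 1 / v powr \<beta>"
    have "C^2/10 * sqrt X * ((1/4) powr \<bar>\<alpha>\<bar> * L powr (-\<alpha>)) * ((1/4) powr \<bar>\<beta>\<bar> * L powr (-\<beta>))
        \<le> C^2/10 * sqrt X * (1 / u powr \<alpha>) * (1 / v powr \<beta>)"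
      using h(3,4) X by (intro mult_mono) auto
    then show ?thesis using h(1,2) by linarith
  qed
  then show ?thesis unfolding d_def
    using \<open>L powr (-\<alpha>-\<beta>) = L powr (-\<alpha>) * L powr (-\<beta>)\<close> by (simp add: ac_simps)
qed

theorem lemma2p2:
  fixes \<alpha> \<beta> C :: real and A B :: "nat set"
  assumes "\<alpha> < 1" and "\<beta> < 1"
    and "0 \<notin> A" and "0 \<notin> B"
    and "C > 0"
    and "\<forall>\<^sub>F X in at_top. real (count_upto A X) \<ge> C * sqrt X / (ln X) powr \<alpha>"
    and "\<forall>\<^sub>F X in at_top. real (count_upto B X) \<ge> C * sqrt X / (ln X) powr \<beta>"
  shows "\<exists>C'>0. \<forall>\<^sub>F X in at_top.
           real (card {(a, b). a \<in> A \<and> b \<in> B \<and> real (a * b) \<le> X})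
             \<ge> C' * sqrt X * (ln X) powr (1 - \<alpha> - \<beta>)"
proof -
  note b = assms(2) and A0 = assms(3) and B0 = assms(4) and C = assms(5)
  obtain XA where XA: "\<And>X. X \<ge> XA \<Longrightarrow> real (count_upto A X) \<ge> C * sqrt X / (ln X) powr \<alpha>"
    using assms(6) unfolding eventually_at_top_linorder by blast
  obtain XB where XB: "\<And>X. X \<ge> XB \<Longrightarrow> real (count_upto B X) \<ge> C * sqrt X / (ln X) powr \<beta>"
    using assms(7) unfolding eventually_at_top_linorder by blast
  define XA' where "XA' = max XA 1"
  define XB' where "XB' = max XB 1"
  define K where "K = (1/4::real) powr \<bar>\<alpha>\<bar> * (1/4) powr \<bar>\<beta>\<bar>"
  define T where "T = C^2/10 * K"
  define C' where "C' = T / 8"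
  have Kpos: "K > 0" unfolding K_def by simp
  have C'pos: "C' > 0" unfolding C'_def T_def using C Kpos by simp
  have main: "C' * sqrt X * (ln X) powr (1 - \<alpha> - \<beta>)
      \<le> real (card {(a, b). a \<in> A \<and> b \<in> B \<and> real (a * b) \<le> X})"
    if XM: "X \<ge> max (exp 16) (max (XA'^4) (XB'^2))" for X
  proof -
    have Xpos: "X > 0" using XM exp_gt_zero[of 16] by linarith
    define L where "L = ln X"
    have L16: "L \<ge> 16" unfolding L_def using XM Xpos by (simp add: ln_ge_iff)
    have XA'pos: "XA' > 0" unfolding XA'_def by simp
    have XB'pos: "XB' > 0" unfolding XB'_def by simp
    have "ln (XA'^4) \<le> L" unfolding L_def using XM XA'pos Xpos by (subst ln_le_cancel_iff) auto
    then have lA: "4 * ln XA' \<le> L" using XA'pos by (simp add: ln_realpow)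
    have "ln (XB'^2) \<le> L" unfolding L_def using XM XB'pos Xpos by (subst ln_le_cancel_iff) auto
    then have lB: "2 * ln XB' \<le> L" using XB'pos by (simp add: ln_realpow)
    have ln2: "ln (2::real) < 1" "ln (2::real) > 0" using ln_2_less_1 by auto
    define J1 where "J1 = nat \<lceil>L / (4 * ln 2)\<rceil>"
    define J2 where "J2 = nat \<lfloor>L / (2 * ln 2)\<rfloor>"
    have Lpos: "L > 0" using L16 by linarith
    have q1: "L / (4 * ln 2) \<ge> L / 4" using Lpos ln2 by (intro divide_left_mono) auto
    have J1le: "real J1 \<le> L / (4 * ln 2) + 1" unfolding J1_def using Lpos ln2
      by (simp add: of_nat_nat)
    have J1ge: "real J1 \<ge> L / (4 * ln 2)" unfolding J1_def using Lpos ln2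
      by (simp add: of_nat_nat)
    have J2ge: "real J2 \<ge> L / (2 * ln 2) - 1" unfolding J2_def using Lpos ln2
      by (simp add: of_nat_nat)
    have J2le: "real J2 \<le> L / (2 * ln 2)" unfolding J2_def using Lpos ln2
      by (simp add: of_nat_nat)
    have jlow: "L/4 \<le> real j * ln 2" if "J1 \<le> j" for j
    proof -
      have "L / (4 * ln 2) \<le> real j" using J1ge that by (meson of_nat_le_iff order.trans)
      then show ?thesis using ln2 by (simp add: field_simps)
    qed
    have jhigh: "real j * ln 2 \<le> L/2" if "j \<le> J2" for j
    proof -
      have "real j \<le> L / (2 * ln 2)" using J2le that by (meson of_nat_le_iff order.trans)
      then show ?thesis using ln2 by (simp add: field_simps)
    qed
    have diff: "real J2 - real J1 \<ge> L / 8"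
    proof -
      have "L / (2 * ln 2) = 2 * (L / (4 * ln 2))" by (simp add: field_simps)
      then show ?thesis using J1le J2ge q1 L16 by linarith
    qed
    have J12: "J1 \<le> J2" using diff Lpos by simp
    define g where "g j = C * sqrt (X/2^j) / ln (X/2^j) powr \<beta>" for j :: nat
    have hB: "g j \<le> real (count_upto B (X / 2^j))" if "J1 \<le> j" "j \<le> J2" for j
    proof -
      have "ln (X / 2^j) = L - real j * ln 2" unfolding L_def using Xpos by (simp add: ln_div ln_realpow)
      then have "ln XB' \<le> ln (X / 2^j)" using jhigh[OF that(2)] lB by linarith
      then have "XB' \<le> X / 2^j" using XB'pos Xpos by simp
      then have "XB \<le> X / 2^j" unfolding XB'_def by linarith
      then show ?thesis unfolding g_def by (rule XB)
    qed
    have g0: "g J2 \<ge> 0" unfolding g_def using C Xpos by simp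
    have comb': "(\<Sum>j\<in>{J1..<J2}. (g j - g (Suc j)) * real (count_upto A (2^j)))
          \<le> real (card {(a, b). a \<in> A \<and> b \<in> B \<and> real (a * b) \<le> X})"
      by (rule comb[OF Xpos J12 A0 B0 hB g0])
    have each: "T * sqrt X * L powr (-\<alpha>-\<beta>) \<le> (g j - g (Suc j)) * real (count_upto A (2^j))"
      if j: "j \<in> {J1..<J2}" for j
    proof -
      have hA: "C * sqrt (2^j) / ln (2^j) powr \<alpha> \<le> real (count_upto A (2^j))"
      proof (rule XA)
        have "ln XA' \<le> ln ((2::real)^j)" using jlow[of j] j lA by (simp add: ln_realpow)
        then have "XA' \<le> 2^j" using XA'pos by simp
        then show "XA \<le> 2^j" unfolding XA'_def by linarith
      qed
      show ?thesis unfolding T_def K_def g_def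
        by (rule term_bound[OF C b Xpos L_def L16 jlow jhigh hA]) (use j in auto)
    qed
    have Tpos: "T * sqrt X * L powr (-\<alpha>-\<beta>) \<ge> 0" unfolding T_def using Kpos Xpos by (simp add: less_imp_le)
    have "L / 8 * (T * sqrt X * L powr (-\<alpha>-\<beta>)) \<le> (real J2 - real J1) * (T * sqrt X * L powr (-\<alpha>-\<beta>))"
      using diff Tpos by (intro mult_right_mono) auto
    also have "\<dots> = (\<Sum>j\<in>{J1..<J2}. T * sqrt X * L powr (-\<alpha>-\<beta>))" using J12 by (simp add: of_nat_diff)
    also have "\<dots> \<le> (\<Sum>j\<in>{J1..<J2}. (g j - g (Suc j)) * real (count_upto A (2^j)))"
      by (intro sum_mono each)
    finally have fin: "L / 8 * (T * sqrt X * L powr (-\<alpha>-\<beta>)) \<le> real (card {(a, b). a \<in> A \<and> b \<in> B \<and> real (a * b) \<le> X})"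
      using comb' by linarith
    have "L * L powr (-\<alpha>-\<beta>) = L powr (1 - \<alpha> - \<beta>)"
    proof -
      have "L powr (1 - \<alpha> - \<beta>) = L powr 1 * L powr (-\<alpha>-\<beta>)"
        by (subst powr_add[symmetric]) (simp add: algebra_simps)
      then show ?thesis using Lpos by simp
    qed
    then have "L / 8 * (T * sqrt X * L powr (-\<alpha>-\<beta>)) = C' * sqrt X * L powr (1 - \<alpha> - \<beta>)"
      unfolding C'_def by (simp add: field_simps)
    then have "C' * sqrt X * L powr (1 - \<alpha> - \<beta>) \<le> real (card {(a, b). a \<in> A \<and> b \<in> B \<and> real (a * b) \<le> X})"
      using fin by linarith
    then show ?thesis unfolding L_def .
  qed
  show ?thesis
    by (rule exI[of _ C'], intro conjI C'pos, unfold eventually_at_top_linorder) (use main in blast)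
qed

end
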